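(* The continuum $|\mathbb G|$ is one-dimensional.
   Context: A graph is a pair $A=(V(A),E(A))$ with $E(A)$ reflexive and symmetric; a topological graph additionally has $V$ compact, second countable, zero-dimensional and $E$ closed. Epimorphisms are (continuous) edge-preserving maps surjective on vertices and edges. A vertex set $S$ is disconnected if it splits into two nonempty closed subsets with no edges between them; otherwise connected; components are maximal connected subsets. An epimorphism $f\colon A\to B$ is confluent if for every connected $Q\subseteq V(B)$ each component $C$ of $f^{-1}(Q)$ satisfies $f(C)=Q$. $\mathcal G$ is the class of finite connected graphs with confluent epimorphisms, and $\mathbb G$ is its projective Fraïssé limit: the unique topological graph such that (1) every $A\in\mathcal G$ is a confluent epimorphic image of $\mathbb G$; (2) for $A,B\in\mathcal G$ and confluent epimorphisms $f\colon\mathbb G\to A$, $g\colon B\to A$ there is a confluent epimorphism $h\colon\mathbb G\to B$ with $f=g\circ h$; (3) for each $\varepsilon>0$ some confluent epimorphism from $\mathbb G$ onto a member of $\mathcal G$ has all point-preimages of diameter $<\varepsilon$. The edge relation of $\mathbb G$ is an equivalence relation and $|\mathbb G|=V(\mathbb G)/E(\mathbb G)$ is its topological realization. *)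

theory Defs
  imports "HOL-Analysis.Analysis"
begin

text \<open>A graph is given by a topology X (vertex set = topspace X) and an edge relation E.
  Finite graphs carry the discrete topology.\<close>

definition is_graph :: "'a topology \<Rightarrow> ('a \<times> 'a) set \<Rightarrow> bool" where
  "is_graph X E \<longleftrightarrow> E \<subseteq> topspace X \<times> topspace X \<and>
     (\<forall>x\<in>topspace X. (x, x) \<in> E) \<and> (\<forall>x y. (x, y) \<in> E \<longrightarrow> (y, x) \<in> E)"

definition zero_dimensional :: "'a topology \<Rightarrow> bool" where
  "zero_dimensional X \<longleftrightarrow>
     (\<forall>U x. openin X U \<and> x \<in> U \<longrightarrow> (\<exists>C. openin X C \<and> closedin X C \<and> x \<in> C \<and> C \<subseteq> U))"

definition topological_graph :: "'a topology \<Rightarrow> ('a \<times> 'a) set \<Rightarrow> bool" where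
  "topological_graph X E \<longleftrightarrow> is_graph X E \<and> compact_space X \<and> second_countable X \<and>
     zero_dimensional X \<and> closedin (prod_topology X X) E"

definition gr_disconnected :: "'a topology \<Rightarrow> ('a \<times> 'a) set \<Rightarrow> 'a set \<Rightarrow> bool" where
  "gr_disconnected X E S \<longleftrightarrow>
     (\<exists>P Q. P \<noteq> {} \<and> Q \<noteq> {} \<and> P \<union> Q = S \<and> P \<inter> Q = {} \<and>
        closedin (subtopology X S) P \<and> closedin (subtopology X S) Q \<and>
        (\<forall>p\<in>P. \<forall>q\<in>Q. (p, q) \<notin> E))"

definition gr_connected :: "'a topology \<Rightarrow> ('a \<times> 'a) set \<Rightarrow> 'a set \<Rightarrow> bool" where
  "gr_connected X E S \<longleftrightarrow> S \<subseteq> topspace X \<and> \<not> gr_disconnected X E S"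

definition gr_component :: "'a topology \<Rightarrow> ('a \<times> 'a) set \<Rightarrow> 'a set \<Rightarrow> 'a set \<Rightarrow> bool" where
  "gr_component X E S C \<longleftrightarrow> C \<subseteq> S \<and> gr_connected X E C \<and>
     (\<forall>D. C \<subseteq> D \<and> D \<subseteq> S \<and> gr_connected X E D \<longrightarrow> D = C)"

definition epimorphism ::
  "'a topology \<Rightarrow> ('a \<times> 'a) set \<Rightarrow> 'b topology \<Rightarrow> ('b \<times> 'b) set \<Rightarrow> ('a \<Rightarrow> 'b) \<Rightarrow> bool" where
  "epimorphism X EA Y EB f \<longleftrightarrow> continuous_map X Y f \<and>
     (\<forall>a b. (a, b) \<in> EA \<longrightarrow> (f a, f b) \<in> EB) \<and>
     f ` topspace X = topspace Y \<and> (\<lambda>(a, b). (f a, f b)) ` EA = EB"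

definition confluent_epi ::
  "'a topology \<Rightarrow> ('a \<times> 'a) set \<Rightarrow> 'b topology \<Rightarrow> ('b \<times> 'b) set \<Rightarrow> ('a \<Rightarrow> 'b) \<Rightarrow> bool" where
  "confluent_epi X EA Y EB f \<longleftrightarrow> epimorphism X EA Y EB f \<and>
     (\<forall>Q. gr_connected Y EB Q \<longrightarrow>
        (\<forall>C. gr_component X EA {x \<in> topspace X. f x \<in> Q} C \<longrightarrow> f ` C = Q))"

text \<open>The class \<open>\<G>\<close>: finite (nonempty) connected graphs; vertices taken in nat
  (every finite graph is isomorphic to one of these), with the discrete topology.\<close>

definition fin_conn_graph :: "nat set \<Rightarrow> (nat \<times> nat) set \<Rightarrow> bool" where
  "fin_conn_graph VA EA \<longleftrightarrow> finite VA \<and> VA \<noteq> {} \<and>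
     is_graph (discrete_topology VA) EA \<and> gr_connected (discrete_topology VA) EA VA"

text \<open>The projective Fraisse limit of \<open>\<G>\<close>, characterised by (1)-(3); its vertex set is
  a subset V of a metric space (so that diameters make sense).\<close>

definition fraisse_limit_G :: "'a::metric_space set \<Rightarrow> ('a \<times> 'a) set \<Rightarrow> bool" where
  "fraisse_limit_G V E \<longleftrightarrow>
     topological_graph (top_of_set V) E \<and>
     (\<forall>VA EA. fin_conn_graph VA EA \<longrightarrow>
        (\<exists>f. confluent_epi (top_of_set V) E (discrete_topology VA) EA f)) \<and>
     (\<forall>VA EA VB EB f g. fin_conn_graph VA EA \<and> fin_conn_graph VB EB \<and>
        confluent_epi (top_of_set V) E (discrete_topology VA) EA f \<and>
        confluent_epi (discrete_topology VB) EB (discrete_topology VA) EA g \<longrightarrow>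
        (\<exists>h. confluent_epi (top_of_set V) E (discrete_topology VB) EB h \<and>
             (\<forall>x\<in>V. f x = g (h x)))) \<and>
     (\<forall>\<epsilon>>0. \<exists>VA EA f. fin_conn_graph VA EA \<and>
        confluent_epi (top_of_set V) E (discrete_topology VA) EA f \<and>
        (\<forall>a\<in>VA. diameter {x \<in> V. f x = a} < \<epsilon>))"

text \<open>Quotient topology on the set of classes \<open>V // E\<close> (the quotient of X by the map
  \<open>x \<mapsto> E``{x}\<close>).\<close>

definition realization :: "'a topology \<Rightarrow> ('a \<times> 'a) set \<Rightarrow> 'a set topology" where
  "realization X E = topology (\<lambda>U. U \<subseteq> topspace X // E \<and>
      openin X {x \<in> topspace X. E `` {x} \<in> U})"

lemma istopology_realization:
  "istopology (\<lambda>U. U \<subseteq> topspace X // E \<and> openin X {x \<in> topspace X. E `` {x} \<in> U})"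
proof -
  have i: "{x \<in> topspace X. E `` {x} \<in> S \<inter> T} =
           {x \<in> topspace X. E `` {x} \<in> S} \<inter> {x \<in> topspace X. E `` {x} \<in> T}" for S T
    by auto
  have u: "{x \<in> topspace X. E `` {x} \<in> \<Union>K} = (\<Union>U\<in>K. {x \<in> topspace X. E `` {x} \<in> U})" for K
    by auto
  show ?thesis unfolding istopology_def
  proof (rule conjI; intro allI impI)
    fix S T assume "S \<subseteq> topspace X // E \<and> openin X {x \<in> topspace X. E `` {x} \<in> S}"
      and "T \<subseteq> topspace X // E \<and> openin X {x \<in> topspace X. E `` {x} \<in> T}"
    then show "S \<inter> T \<subseteq> topspace X // E \<and> openin X {x \<in> topspace X. E `` {x} \<in> S \<inter> T}"
      unfolding i by auto
  next
    fix K assume "\<forall>U\<in>K. U \<subseteq> topspace X // E \<and> openin X {x \<in> topspace X. E `` {x} \<in> U}"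
    then show "\<Union>K \<subseteq> topspace X // E \<and> openin X {x \<in> topspace X. E `` {x} \<in> \<Union>K}"
      unfolding u by (auto intro!: openin_Union)
  qed
qed

definition covering_dim_le :: "'a topology \<Rightarrow> nat \<Rightarrow> bool" where
  "covering_dim_le X n \<longleftrightarrow>
     (\<forall>\<U>. finite \<U> \<and> (\<forall>U\<in>\<U>. openin X U) \<and> \<Union>\<U> = topspace X \<longrightarrow>
        (\<exists>\<V>. finite \<V> \<and> (\<forall>W\<in>\<V>. openin X W) \<and> \<Union>\<V> = topspace X \<and>
             (\<forall>W\<in>\<V>. \<exists>U\<in>\<U>. W \<subseteq> U) \<and>
             (\<forall>x\<in>topspace X. card {W\<in>\<V>. x \<in> W} \<le> n + 1)))"

definition covering_dim_eq :: "'a topology \<Rightarrow> nat \<Rightarrow> bool" where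
  "covering_dim_eq X n \<longleftrightarrow> covering_dim_le X n \<and> (\<forall>m<n. \<not> covering_dim_le X m)"

end

theory Submission
  imports Defs
begin

lemma gr_disconnected_discrete:
  assumes "S \<subseteq> U"
  shows "gr_disconnected (discrete_topology U) E S \<longleftrightarrow>
    (\<exists>P Q. P \<noteq> {} \<and> Q \<noteq> {} \<and> P \<union> Q = S \<and> P \<inter> Q = {} \<and> (\<forall>p\<in>P. \<forall>q\<in>Q. (p, q) \<notin> E))"
proof
  assume "gr_disconnected (discrete_topology U) E S"
  then obtain P Q where h: "P \<noteq> {}" "Q \<noteq> {}" "P \<union> Q = S" "P \<inter> Q = {}" "\<forall>p\<in>P. \<forall>q\<in>Q. (p, q) \<notin> E"
    unfolding gr_disconnected_def by metis
  then show "\<exists>P Q. P \<noteq> {} \<and> Q \<noteq> {} \<and> P \<union> Q = S \<and> P \<inter> Q = {} \<and> (\<forall>p\<in>P. \<forall>q\<in>Q. (p, q) \<notin> E)"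
    by (intro exI[of _ P] exI[of _ Q] conjI)
next
  assume "\<exists>P Q. P \<noteq> {} \<and> Q \<noteq> {} \<and> P \<union> Q = S \<and> P \<inter> Q = {} \<and> (\<forall>p\<in>P. \<forall>q\<in>Q. (p, q) \<notin> E)"
  then obtain P Q where h: "P \<noteq> {}" "Q \<noteq> {}" "P \<union> Q = S" "P \<inter> Q = {}" "\<forall>p\<in>P. \<forall>q\<in>Q. (p, q) \<notin> E"
    by metis
  have c: "closedin (subtopology (discrete_topology U) S) P" "closedin (subtopology (discrete_topology U) S) Q"
    using h(3) assms by auto
  show "gr_disconnected (discrete_topology U) E S"
    unfolding gr_disconnected_def by (intro exI[of _ P] exI[of _ Q] conjI h c)
qed

lemma gr_connected_discrete:
  "gr_connected (discrete_topology U) E S \<longleftrightarrow> S \<subseteq> U \<and>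
    \<not> (\<exists>P Q. P \<noteq> {} \<and> Q \<noteq> {} \<and> P \<union> Q = S \<and> P \<inter> Q = {} \<and> (\<forall>p\<in>P. \<forall>q\<in>Q. (p, q) \<notin> E))"
proof (cases "S \<subseteq> U")
  case True
  then show ?thesis unfolding gr_connected_def using gr_disconnected_discrete[OF True, of E] by simp
next
  case False
  then show ?thesis unfolding gr_connected_def by simp
qed


lemma split_graph:
  assumes A: "fin_conn_graph VA EA" and e1: "(a,b) \<in> EA" and e2: "(b,c) \<in> EA"
    and d: "a \<noteq> b" "b \<noteq> c" "a \<noteq> c"
  shows "\<exists>VB EB g. fin_conn_graph VB EB \<and> confluent_epi (discrete_topology VB) EB (discrete_topology VA) EA g \<and>
     (\<forall>u v w. g u = a \<longrightarrow> g v = b \<longrightarrow> g w = c \<longrightarrow> (u,v) \<in> EB \<longrightarrow> (v,w) \<in> EB \<longrightarrow> False)"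
proof -
  have fin: "finite VA" and ne: "VA \<noteq> {}" and sub: "EA \<subseteq> VA \<times> VA"
    and refl: "\<And>x. x \<in> VA \<Longrightarrow> (x,x) \<in> EA" and sym: "\<And>x y. (x,y) \<in> EA \<Longrightarrow> (y,x) \<in> EA"
    and conn: "gr_connected (discrete_topology VA) EA VA"
    using A unfolding fin_conn_graph_def is_graph_def topspace_discrete_topology by blast+
  define n where "n = Suc (Max VA)"
  have nA: "n \<notin> VA"
  proof
    assume "n \<in> VA" then have "n \<le> Max VA" using Max_ge[OF fin] by blast
    then show False by (simp add: n_def)
  qed
  have abc: "a \<in> VA" "b \<in> VA" "c \<in> VA" using e1 e2 sub by auto
  have nabc: "n \<noteq> a" "n \<noteq> b" "n \<noteq> c" using abc nA by auto
  define VB where "VB = insert n VA"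
  define g where "g = (\<lambda>v. if v = n then b else v)"
  define EB where "EB = {(u,v). ((u,v) \<in> EA \<and> u \<noteq> b \<and> v \<noteq> b) \<or> (u \<in> {b,n} \<and> v \<in> {b,n})
     \<or> (u = b \<and> (b,v) \<in> EA \<and> v \<noteq> b \<and> v \<noteq> c) \<or> (v = b \<and> (b,u) \<in> EA \<and> u \<noteq> b \<and> u \<noteq> c)
     \<or> (u = n \<and> (b,v) \<in> EA \<and> v \<noteq> b \<and> v \<noteq> a) \<or> (v = n \<and> (b,u) \<in> EA \<and> u \<noteq> b \<and> u \<noteq> a)}"
  have memEB: "\<And>u v. (u,v) \<in> EB \<longleftrightarrow> ((u,v) \<in> EA \<and> u \<noteq> b \<and> v \<noteq> b) \<or> (u \<in> {b,n} \<and> v \<in> {b,n})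
     \<or> (u = b \<and> (b,v) \<in> EA \<and> v \<noteq> b \<and> v \<noteq> c) \<or> (v = b \<and> (b,u) \<in> EA \<and> u \<noteq> b \<and> u \<noteq> c)
     \<or> (u = n \<and> (b,v) \<in> EA \<and> v \<noteq> b \<and> v \<noteq> a) \<or> (v = n \<and> (b,u) \<in> EA \<and> u \<noteq> b \<and> u \<noteq> a)"
    by (simp add: EB_def)
  have EBsub: "EB \<subseteq> VB \<times> VB" using sub abc by (auto simp: memEB VB_def)
  have EBrefl: "\<And>x. x \<in> VB \<Longrightarrow> (x,x) \<in> EB" using refl by (auto simp: memEB VB_def)
  have EBsym: "\<And>x y. (x,y) \<in> EB \<Longrightarrow> (y,x) \<in> EB"
  proof -
    fix x y assume "(x,y) \<in> EB" then show "(y,x) \<in> EB" using sym[of x y] by (auto simp: memEB)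
  qed
  have gb: "g b = b" "g n = b" using nabc by (auto simp: g_def)
  have gVB: "\<And>u. u \<in> VB \<Longrightarrow> g u \<in> VA" using abc by (auto simp: g_def VB_def)
  have pres: "\<And>u v. (u,v) \<in> EB \<Longrightarrow> (g u, g v) \<in> EA"
  proof -
    fix u v assume "(u,v) \<in> EB"
    then show "(g u, g v) \<in> EA"
      using nabc sub nA refl[of b] abc sym[of b u] by (auto simp: g_def memEB)
  qed
  have gg: "\<And>u w. g u = b \<Longrightarrow> g w = b \<Longrightarrow> (u,w) \<in> EB"
  proof -
    fix u w assume "g u = b" "g w = b"
    then have "u \<in> {b,n}" "w \<in> {b,n}" by (auto simp: g_def split: if_splits)
    then show "(u,w) \<in> EB" by (simp add: memEB)
  qed
  have ginj: "\<And>u w. g u = g w \<Longrightarrow> u \<noteq> w \<Longrightarrow> g u = b"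
    by (auto simp: g_def split: if_splits)
  have lift: "\<And>p q. (p,q) \<in> EA \<Longrightarrow> \<exists>u v. (u,v) \<in> EB \<and> g u = p \<and> g v = q"
  proof -
    fix p q assume pq: "(p,q) \<in> EA"
    have "p \<in> VA" "q \<in> VA" using pq sub by auto
    then have pn: "p \<noteq> n" "q \<noteq> n" using nA by auto
    show "\<exists>u v. (u,v) \<in> EB \<and> g u = p \<and> g v = q"
    proof (cases "p = b")
      case True
      show ?thesis
      proof (cases "q = b")
        case True then show ?thesis using \<open>p = b\<close> gb by (intro exI[of _ b]) (auto simp: memEB)
      next
        case False
        show ?thesis
        proof (cases "q = c")
          case True
          then show ?thesis using \<open>p = b\<close> False d pq gb pn
            by (intro exI[of _ n] exI[of _ q]) (auto simp: memEB g_def)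
        next
          case False2: False
          then show ?thesis using \<open>p = b\<close> False d pq gb pn
            by (intro exI[of _ b] exI[of _ q]) (auto simp: memEB g_def)
        qed
      qed
    next
      case False
      show ?thesis
      proof (cases "q = b")
        case True
        show ?thesis
        proof (cases "p = a")
          case True
          then show ?thesis using \<open>q = b\<close> False d pq gb pn sym[of p b]
            by (intro exI[of _ p] exI[of _ b]) (auto simp: memEB g_def)
        next
          case False2: False
          then show ?thesis using \<open>q = b\<close> False d pq gb pn sym[of p b]
            by (intro exI[of _ p] exI[of _ n]) (auto simp: memEB g_def)
        qed
      next
        case False2: False
        then show ?thesis using False pq pn
          by (intro exI[of _ p] exI[of _ q]) (auto simp: memEB g_def)
      qed
    qed
  qed
  have preconn: "gr_connected (discrete_topology VB) EB {u \<in> VB. g u \<in> Q}"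
    if Q: "gr_connected (discrete_topology VA) EA Q" for Q
  proof -
    define S' where "S' = {u \<in> VB. g u \<in> Q}"
    have QA: "Q \<subseteq> VA" and Qn: "\<not> (\<exists>P R. P \<noteq> {} \<and> R \<noteq> {} \<and> P \<union> R = Q \<and> P \<inter> R = {} \<and> (\<forall>p\<in>P. \<forall>q\<in>R. (p, q) \<notin> EA))"
      using Q unfolding gr_connected_discrete by auto
    have gS: "g ` S' = Q"
    proof
      show "g ` S' \<subseteq> Q" by (auto simp: S'_def)
      show "Q \<subseteq> g ` S'"
      proof
        fix q assume "q \<in> Q"
        then have "q \<in> VB" "g q = q" using QA nA by (auto simp: VB_def g_def)
        then show "q \<in> g ` S'" using \<open>q \<in> Q\<close> by (force simp: S'_def)
      qed
    qed
    have key: "False" if XY: "X \<union> Y = S'" "X \<inter> Y = {}" "\<forall>p\<in>X. \<forall>q\<in>Y. (p,q) \<notin> EB"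
      and uw: "u \<in> X" "w \<in> Y" "(g u, g w) \<in> EA" "g w \<noteq> b" for X Y u w
    proof -
      have wn: "w \<noteq> n" "g w = w" using uw gb by (auto simp: g_def split: if_splits)
      have wA: "w \<in> VA" using uw(3) sub wn by auto
      show False
      proof (cases "g u = b")
        case False
        then have "u \<noteq> n" "g u = u" using gb by (auto simp: g_def split: if_splits)
        then have "(u,w) \<in> EB" using uw False wn by (auto simp: memEB)
        then show False using XY uw by auto
      next
        case True
        have uS: "u \<in> S'" and wS: "w \<in> S'" using XY uw by auto
        then have bQ: "b \<in> Q" using True by (auto simp: S'_def)
        have bS: "b \<in> S'" "n \<in> S'" using bQ abc gb by (auto simp: S'_def VB_def)
        have ubn: "u = b \<or> u = n" using True by (auto simp: g_def split: if_splits)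
        have bX: "b \<in> X" "n \<in> X"
        proof -
          have "(u,b) \<in> EB" "(u,n) \<in> EB" using ubn by (auto simp: memEB)
          then show "b \<in> X" "n \<in> X" using XY uw bS by blast+
        qed
        have "(b, w) \<in> EA" using uw True wn by simp
        show False
        proof (cases "w = c")
          case True
          then have "(n,w) \<in> EB" using \<open>(b,w) \<in> EA\<close> d uw by (auto simp: memEB)
          then show False using XY bX uw by blast
        next
          case False
          then have "(b,w) \<in> EB" using \<open>(b,w) \<in> EA\<close> d uw by (auto simp: memEB)
          then show False using XY bX uw by blast
        qed
      qed
    qed
    have "\<not> gr_disconnected (discrete_topology VB) EB S'"
    proof
      assume "gr_disconnected (discrete_topology VB) EB S'"
      then obtain P' R' where PR: "P' \<noteq> {}" "R' \<noteq> {}" "P' \<union> R' = S'" "P' \<inter> R' = {}"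
        "\<forall>p\<in>P'. \<forall>q\<in>R'. (p, q) \<notin> EB"
      proof -
        have dd: "S' \<subseteq> VB" by (auto simp: S'_def)
        show ?thesis using iffD1[OF gr_disconnected_discrete[OF dd] \<open>gr_disconnected (discrete_topology VB) EB S'\<close>] that by blast
      qed
      have PR2: "\<forall>p\<in>R'. \<forall>q\<in>P'. (p, q) \<notin> EB" using PR(5) EBsym by blast
      have "g ` P' \<noteq> {}" "g ` R' \<noteq> {}" using PR by auto
      moreover have "g ` P' \<union> g ` R' = Q" using gS PR(3) image_Un[of g P' R'] by simp
      moreover have "g ` P' \<inter> g ` R' = {}"
      proof (rule ccontr)
        assume "g ` P' \<inter> g ` R' \<noteq> {}"
        then obtain u w where uw: "u \<in> P'" "w \<in> R'" "g u = g w" by auto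
        then have "u \<noteq> w" using PR by auto
        then have "(u,w) \<in> EB" using uw(3) gg ginj by metis
        then show False using PR uw by auto
      qed
      moreover have "\<forall>p\<in>g ` P'. \<forall>q\<in>g ` R'. (p, q) \<notin> EA"
      proof (intro ballI notI)
        fix p q assume pq: "p \<in> g ` P'" "q \<in> g ` R'" "(p, q) \<in> EA"
        then obtain u w where uw: "u \<in> P'" "w \<in> R'" "g u = p" "g w = q" by blast
        have e: "(g u, g w) \<in> EA" using uw(3,4) pq(3) by simp
        have e2: "(g w, g u) \<in> EA" using sym[OF e] .
        show False
        proof (cases "g w = b")
          case False
          show False by (rule key[OF PR(3,4,5) uw(1,2) e False])
        next
          case True
          show False
          proof (cases "g u = b")
            case False
            have "R' \<union> P' = S'" "R' \<inter> P' = {}" using PR(3,4) by blast+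
            then show False by (rule key[OF _ _ PR2 uw(2,1) e2 False])
          next
            case True2: True
            then have "(u,w) \<in> EB" using gg[OF True2 True] by simp
            then show False using PR(5) uw(1,2) by blast
          qed
        qed
      qed
      ultimately have "\<exists>P R. P \<noteq> {} \<and> R \<noteq> {} \<and> P \<union> R = Q \<and> P \<inter> R = {} \<and> (\<forall>p\<in>P. \<forall>q\<in>R. (p, q) \<notin> EA)"
        by (intro exI[of _ "g ` P'"] exI[of _ "g ` R'"] conjI)
      then show False using Qn by (rule notE[rotated])
    qed
    moreover have "S' \<subseteq> VB" by (auto simp: S'_def)
    ultimately show ?thesis by (simp add: gr_connected_def S'_def)
  qed
  have VBeq: "{u \<in> VB. g u \<in> VA} = VB" using gVB by auto
  have fB: "fin_conn_graph VB EB"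
  proof -
    have "is_graph (discrete_topology VB) EB"
      unfolding is_graph_def topspace_discrete_topology
    proof (intro conjI allI impI ballI)
      show "EB \<subseteq> VB \<times> VB" by (rule EBsub)
      show "(x, x) \<in> EB" if "x \<in> VB" for x using EBrefl that by blast
      show "(y, x) \<in> EB" if "(x, y) \<in> EB" for x y using EBsym that by blast
    qed
    moreover have "gr_connected (discrete_topology VB) EB VB" using preconn[OF conn] VBeq by simp
    moreover have "finite VB" "VB \<noteq> {}" using fin by (auto simp: VB_def)
    ultimately show ?thesis unfolding fin_conn_graph_def by blast
  qed
  have epi: "epimorphism (discrete_topology VB) EB (discrete_topology VA) EA g"
    unfolding epimorphism_def
  proof (intro conjI allI impI)
    show "continuous_map (discrete_topology VB) (discrete_topology VA) g"
      using gVB by (auto simp: continuous_map_from_discrete_topology)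
    show "(g a, g b) \<in> EA" if "(a, b) \<in> EB" for a b using pres that by blast
    show "g ` topspace (discrete_topology VB) = topspace (discrete_topology VA)"
      unfolding topspace_discrete_topology
    proof
      show "g ` VB \<subseteq> VA" using gVB by blast
      show "VA \<subseteq> g ` VB"
      proof
        fix q assume "q \<in> VA"
        then have "q \<in> VB" "g q = q" using nA by (auto simp: VB_def g_def)
        then show "q \<in> g ` VB" by (metis imageI)
      qed
    qed
    show "(\<lambda>(a, b). (g a, g b)) ` EB = EA"
    proof
      show "(\<lambda>(a, b). (g a, g b)) ` EB \<subseteq> EA"
      proof
        fix x assume "x \<in> (\<lambda>(a, b). (g a, g b)) ` EB"
        then obtain u v where "x = (g u, g v)" "(u,v) \<in> EB" by auto
        then show "x \<in> EA" using pres by simp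
      qed
      show "EA \<subseteq> (\<lambda>(a, b). (g a, g b)) ` EB"
      proof
        fix pq assume "pq \<in> EA"
        then obtain p q where pq: "pq = (p,q)" "(p,q) \<in> EA" by (cases pq) auto
        then obtain u v where "(u,v) \<in> EB" "g u = p" "g v = q" using lift by blast
        then show "pq \<in> (\<lambda>(a, b). (g a, g b)) ` EB" using pq by (auto intro: rev_image_eqI)
      qed
    qed
  qed
  have conf: "confluent_epi (discrete_topology VB) EB (discrete_topology VA) EA g"
    unfolding confluent_epi_def
  proof (intro conjI epi allI impI)
    fix Q C assume Q: "gr_connected (discrete_topology VA) EA Q"
      and C: "gr_component (discrete_topology VB) EB {x \<in> topspace (discrete_topology VB). g x \<in> Q} C"
    have QA: "Q \<subseteq> VA" using Q by (auto simp: gr_connected_def)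
    have Cc: "C \<subseteq> {u \<in> VB. g u \<in> Q}" "\<forall>D. C \<subseteq> D \<and> D \<subseteq> {u \<in> VB. g u \<in> Q} \<and> gr_connected (discrete_topology VB) EB D \<longrightarrow> D = C"
      using C unfolding gr_component_def topspace_discrete_topology by blast+
    have "C = {u \<in> VB. g u \<in> Q}" using Cc preconn[OF Q] by blast
    moreover have "g ` {u \<in> VB. g u \<in> Q} = Q"
    proof
      show "Q \<subseteq> g ` {u \<in> VB. g u \<in> Q}"
      proof
        fix q assume "q \<in> Q"
        then have "q \<in> VB" "g q = q" using QA nA by (auto simp: VB_def g_def)
        then show "q \<in> g ` {u \<in> VB. g u \<in> Q}" using \<open>q \<in> Q\<close> by force
      qed
    qed auto
    ultimately show "g ` C = Q" by simp
  qed
  have last: "\<forall>u v w. g u = a \<longrightarrow> g v = b \<longrightarrow> g w = c \<longrightarrow> (u,v) \<in> EB \<longrightarrow> (v,w) \<in> EB \<longrightarrow> False"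
  proof (intro allI impI)
    fix u v w assume h: "g u = a" "g v = b" "g w = c" "(u,v) \<in> EB" "(v,w) \<in> EB"
    have "u = a" using h(1) d nabc by (auto simp: g_def split: if_splits)
    moreover have "w = c" using h(3) d nabc by (auto simp: g_def split: if_splits)
    moreover have "v = b \<or> v = n" using h(2) by (auto simp: g_def split: if_splits)
    ultimately show False using h(4,5) d nabc nA sub by (auto simp: memEB)
  qed
  show ?thesis using fB conf last by blast
qed

lemma fr_basic:
  assumes F: "fraisse_limit_G V E"
  shows "compact V" "E \<subseteq> V \<times> V" "\<And>x. x \<in> V \<Longrightarrow> (x,x) \<in> E" "\<And>x y. (x,y) \<in> E \<Longrightarrow> (y,x) \<in> E" "compact E"
    "zero_dimensional (top_of_set V)"
proof -
  have tg: "topological_graph (top_of_set V) E" using F unfolding fraisse_limit_G_def by blast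
  then have ig: "is_graph (top_of_set V) E" and cs: "compact_space (top_of_set V)"
    and zd: "zero_dimensional (top_of_set V)"
    and cl: "closedin (prod_topology (top_of_set V) (top_of_set V)) E"
    unfolding topological_graph_def by blast+
  show cV: "compact V" using cs by (simp add: compact_space_def compactin_subtopology)
  show "E \<subseteq> V \<times> V" using ig unfolding is_graph_def by simp
  show "\<And>x. x \<in> V \<Longrightarrow> (x,x) \<in> E" using ig unfolding is_graph_def by simp
  show "\<And>x y. (x,y) \<in> E \<Longrightarrow> (y,x) \<in> E" using ig unfolding is_graph_def by blast
  show "zero_dimensional (top_of_set V)" by (rule zd)
  have "closedin (top_of_set (V \<times> V)) E" using cl by simp
  then show "compact E" using closedin_compact compact_Times cV by blast
qed

lemma no_path:
  assumes F: "fraisse_limit_G V E" and xy: "(x,y) \<in> E" and yz: "(y,z) \<in> E"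
    and d: "x \<noteq> y" "y \<noteq> z" "x \<noteq> z"
  shows False
proof -
  note B = fr_basic[OF F]
  have xyz: "x \<in> V" "y \<in> V" "z \<in> V" using xy yz B(2) by auto
  define \<epsilon> where "\<epsilon> = min (dist x y) (min (dist y z) (dist x z))"
  have ep: "\<epsilon> > 0" using d by (simp add: \<epsilon>_def)
  have c3: "\<forall>\<epsilon>>0. \<exists>VA EA f. fin_conn_graph VA EA \<and> confluent_epi (top_of_set V) E (discrete_topology VA) EA f \<and>
        (\<forall>a\<in>VA. diameter {x \<in> V. f x = a} < \<epsilon>)"
    using F unfolding fraisse_limit_G_def by blast
  obtain VA EA f where A: "fin_conn_graph VA EA" and cf: "confluent_epi (top_of_set V) E (discrete_topology VA) EA f"
      and dm: "\<forall>a\<in>VA. diameter {x \<in> V. f x = a} < \<epsilon>"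
    using c3 ep by blast
  have epi: "epimorphism (top_of_set V) E (discrete_topology VA) EA f" using cf unfolding confluent_epi_def by blast
  have fim: "f ` V = VA" using epi unfolding epimorphism_def by simp
  have fpres: "\<And>u v. (u,v) \<in> E \<Longrightarrow> (f u, f v) \<in> EA" using epi unfolding epimorphism_def by blast
  have close: "dist u w < \<epsilon>" if "u \<in> V" "w \<in> V" "f u = f w" for u w
  proof -
    have "bounded {x \<in> V. f x = f u}" using compact_imp_bounded[OF B(1)] by (rule bounded_subset) auto
    then have "dist u w \<le> diameter {x \<in> V. f x = f u}" using that by (intro diameter_bounded_bound) auto
    also have "\<dots> < \<epsilon>" using dm fim that by blast
    finally show ?thesis .
  qed
  have n1: "f x \<noteq> f y"
  proof
    assume "f x = f y" then have "dist x y < \<epsilon>" using close xyz by blast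
    then show False by (simp add: \<epsilon>_def)
  qed
  have n2: "f y \<noteq> f z"
  proof
    assume "f y = f z" then have "dist y z < \<epsilon>" using close xyz by blast
    then show False by (simp add: \<epsilon>_def)
  qed
  have n3: "f x \<noteq> f z"
  proof
    assume "f x = f z" then have "dist x z < \<epsilon>" using close xyz by blast
    then show False by (simp add: \<epsilon>_def)
  qed
  obtain VB EB g where B1: "fin_conn_graph VB EB" and B2: "confluent_epi (discrete_topology VB) EB (discrete_topology VA) EA g"
    and B3: "\<forall>u v w. g u = f x \<longrightarrow> g v = f y \<longrightarrow> g w = f z \<longrightarrow> (u,v) \<in> EB \<longrightarrow> (v,w) \<in> EB \<longrightarrow> False"
    using split_graph[OF A fpres[OF xy] fpres[OF yz] n1 n2 n3] by blast
  have c2: "\<forall>VA EA VB EB f g. fin_conn_graph VA EA \<and> fin_conn_graph VB EB \<and>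
        confluent_epi (top_of_set V) E (discrete_topology VA) EA f \<and>
        confluent_epi (discrete_topology VB) EB (discrete_topology VA) EA g \<longrightarrow>
        (\<exists>h. confluent_epi (top_of_set V) E (discrete_topology VB) EB h \<and>
             (\<forall>x\<in>V. f x = g (h x)))"
    using F unfolding fraisse_limit_G_def by blast
  obtain h where h1: "confluent_epi (top_of_set V) E (discrete_topology VB) EB h"
    and h2: "\<forall>x\<in>V. f x = g (h x)"
    using c2 A B1 cf B2 by blast
  have hpres: "\<And>u v. (u,v) \<in> E \<Longrightarrow> (h u, h v) \<in> EB"
    using h1 unfolding confluent_epi_def epimorphism_def by blast
  show False using B3 h2 xyz hpres[OF xy] hpres[OF yz] by metis
qed

lemma E_trans:
  assumes F: "fraisse_limit_G V E" and xy: "(x,y) \<in> E" and yz: "(y,z) \<in> E"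
  shows "(x,z) \<in> E"
proof -
  note B = fr_basic[OF F]
  show ?thesis
  proof (cases "x = y \<or> y = z")
    case True then show ?thesis using xy yz by auto
  next
    case False
    show ?thesis
    proof (cases "x = z")
      case True
      have "x \<in> V" using xy B(2) by auto
      then show ?thesis using True B(3) by simp
    next
      case False2: False
      then show ?thesis using no_path[OF F xy yz] False by blast
    qed
  qed
qed

lemma class_eq:
  assumes F: "fraisse_limit_G V E" and xy: "(x,y) \<in> E"
  shows "E `` {x} = E `` {y}"
proof -
  note B = fr_basic[OF F]
  have yx: "(y,x) \<in> E" using B(4)[OF xy] .
  show ?thesis
  proof
    show "E `` {x} \<subseteq> E `` {y}" using E_trans[OF F yx] by blast
    show "E `` {y} \<subseteq> E `` {x}" using E_trans[OF F xy] by blast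
  qed
qed

lemma class_two:
  assumes F: "fraisse_limit_G V E" and xy: "(x,y) \<in> E" and xz: "(x,z) \<in> E" and d: "y \<noteq> x" "z \<noteq> x"
  shows "y = z"
proof (rule ccontr)
  assume "y \<noteq> z"
  then show False using no_path[OF F fr_basic(4)[OF F xy] xz] d by blast
qed

lemma openin_realization:
  "openin (realization X E) U \<longleftrightarrow> U \<subseteq> topspace X // E \<and> openin X {x \<in> topspace X. E `` {x} \<in> U}"
  unfolding realization_def using istopology_realization[of X E] by simp

lemma topspace_realization: "topspace (realization X E) = topspace X // E"
proof
  show "topspace (realization X E) \<subseteq> topspace X // E"
    using openin_topspace[of "realization X E"] unfolding openin_realization by blast
  have "{x \<in> topspace X. E `` {x} \<in> topspace X // E} = topspace X" by (auto intro: quotientI)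
  then have "openin (realization X E) (topspace X // E)" unfolding openin_realization by simp
  then show "topspace X // E \<subseteq> topspace (realization X E)" by (rule openin_subset)
qed
lemma int_open:
  assumes F: "fraisse_limit_G V E" and S: "openin (top_of_set V) S"
  shows "openin (top_of_set V) {x \<in> V. E `` {x} \<subseteq> S}"
proof -
  note B = fr_basic[OF F]
  have "closedin (top_of_set V) (V - S)"
    using closedin_diff[OF closedin_topspace[of "top_of_set V"] S] by simp
  then have cVS: "compact (V - S)" using closedin_compact[OF B(1)] by blast
  define K where "K = fst ` (E \<inter> (UNIV \<times> (V - S)))"
  have "compact (E \<inter> (UNIV \<times> (V - S)))"
    using B(5) closed_Times[OF closed_UNIV compact_imp_closed[OF cVS]] by (rule compact_Int_closed)
  moreover have "continuous_on (E \<inter> (UNIV \<times> (V - S))) fst"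
    by (intro continuous_intros)
  ultimately have "compact K" unfolding K_def by (rule compact_continuous_image[rotated])
  then have cK: "closed K" by (rule compact_imp_closed)
  have eq: "{x \<in> V. E `` {x} \<subseteq> S} = V \<inter> (- K)"
  proof
    show "{x \<in> V. E `` {x} \<subseteq> S} \<subseteq> V \<inter> (- K)"
    proof
      fix x assume x: "x \<in> {x \<in> V. E `` {x} \<subseteq> S}"
      have "x \<notin> K"
      proof
        assume "x \<in> K"
        then obtain p where "p \<in> E" "snd p \<in> V - S" "x = fst p" unfolding K_def by auto
        then have "snd p \<in> E `` {x}" by (cases p) auto
        then show False using x \<open>snd p \<in> V - S\<close> by blast
      qed
      then show "x \<in> V \<inter> (- K)" using x by blast
    qed
    show "V \<inter> (- K) \<subseteq> {x \<in> V. E `` {x} \<subseteq> S}"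
    proof
      fix x assume x: "x \<in> V \<inter> (- K)"
      have "E `` {x} \<subseteq> S"
      proof
        fix y assume "y \<in> E `` {x}"
        then have xy: "(x,y) \<in> E" by simp
        then have "y \<in> V" using B(2) by auto
        show "y \<in> S"
        proof (rule ccontr)
          assume "y \<notin> S"
          then have "(x,y) \<in> E \<inter> (UNIV \<times> (V - S))" using xy \<open>y \<in> V\<close> by simp
          then have "x \<in> K" unfolding K_def by (metis fst_conv imageI)
          then show False using x by blast
        qed
      qed
      then show "x \<in> {x \<in> V. E `` {x} \<subseteq> S}" using x by blast
    qed
  qed
  show ?thesis unfolding eq using cK by (intro openin_open_Int) (simp add: open_Compl)
qed

lemma clopen_sep:
  assumes cs: "compact_space X" and zd: "zero_dimensional X" and A: "closedin X A" and B: "closedin X B"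
    and AB: "A \<inter> B = {}"
  shows "\<exists>C. openin X C \<and> closedin X C \<and> A \<subseteq> C \<and> C \<inter> B = {}"
proof -
  have "\<forall>x\<in>A. \<exists>C. openin X C \<and> closedin X C \<and> x \<in> C \<and> C \<subseteq> topspace X - B"
  proof
    fix x assume "x \<in> A"
    then have "x \<in> topspace X - B" using AB closedin_subset[OF A] by blast
    moreover have "openin X (topspace X - B)" using B by (simp add: openin_diff)
    ultimately show "\<exists>C. openin X C \<and> closedin X C \<and> x \<in> C \<and> C \<subseteq> topspace X - B"
      using zd unfolding zero_dimensional_def by blast
  qed
  then obtain Cx where Cx: "\<And>x. x \<in> A \<Longrightarrow> openin X (Cx x) \<and> closedin X (Cx x) \<and> x \<in> Cx x \<and> Cx x \<subseteq> topspace X - B"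
    by metis
  have "compactin X A" using closedin_compact_space[OF cs A] .
  moreover have "\<forall>U \<in> Cx ` A. openin X U" using Cx by blast
  moreover have "A \<subseteq> \<Union>(Cx ` A)" using Cx by blast
  ultimately obtain \<F> where F: "finite \<F>" "\<F> \<subseteq> Cx ` A" "A \<subseteq> \<Union>\<F>"
    unfolding compactin_def by meson
  have "openin X (\<Union>\<F>)" using F(2) Cx by (intro openin_Union) blast
  moreover have "closedin X (\<Union>\<F>)" using F(1,2) Cx by (intro closedin_Union) blast+
  moreover have "\<Union>\<F> \<inter> B = {}" using F(2) Cx by blast
  ultimately show ?thesis using F(3) by blast
qed

lemma disjoint_clopens:
  fixes I :: "nat set"
  assumes cs: "compact_space X" and zd: "zero_dimensional X" and fin: "finite I"
    and Ycl: "\<And>i. i \<in> I \<Longrightarrow> closedin X (Y i)"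
    and Ydj: "\<And>i j. i \<in> I \<Longrightarrow> j \<in> I \<Longrightarrow> i \<noteq> j \<Longrightarrow> Y i \<inter> Y j = {}"
  shows "\<exists>K. \<forall>i\<in>I. openin X (K i) \<and> closedin X (K i) \<and> Y i \<subseteq> K i \<and> (Y i = {} \<longrightarrow> K i = {}) \<and>
            (\<forall>j\<in>I. j \<noteq> i \<longrightarrow> K i \<inter> K j = {})"
proof -
  have "\<forall>i\<in>I. \<exists>C. openin X C \<and> closedin X C \<and> Y i \<subseteq> C \<and> C \<inter> \<Union>(Y ` (I - {i})) = {} \<and> (Y i = {} \<longrightarrow> C = {})"
  proof
    fix i assume i: "i \<in> I"
    show "\<exists>C. openin X C \<and> closedin X C \<and> Y i \<subseteq> C \<and> C \<inter> \<Union>(Y ` (I - {i})) = {} \<and> (Y i = {} \<longrightarrow> C = {})"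
    proof (cases "Y i = {}")
      case True then show ?thesis by (intro exI[of _ "{}"]) auto
    next
      case False
      have cl: "closedin X (\<Union>(Y ` (I - {i})))" using fin Ycl by (intro closedin_Union) auto
      have dj: "Y i \<inter> \<Union>(Y ` (I - {i})) = {}" using Ydj[OF i] by auto
      obtain C where "openin X C" "closedin X C" "Y i \<subseteq> C" "C \<inter> \<Union>(Y ` (I - {i})) = {}"
        using clopen_sep[OF cs zd Ycl[OF i] cl dj] by (elim exE conjE)
      then show ?thesis using False by (intro exI[of _ C]) simp
    qed
  qed
  from bchoice[OF this] obtain C where C0: "\<forall>i\<in>I. openin X (C i) \<and> closedin X (C i) \<and> Y i \<subseteq> C i \<and>
      C i \<inter> \<Union>(Y ` (I - {i})) = {} \<and> (Y i = {} \<longrightarrow> C i = {})" ..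
  note C = C0[rule_format]
  define K where "K i = C i - \<Union>(C ` {j \<in> I. j < i})" for i
  have "\<forall>i\<in>I. openin X (K i) \<and> closedin X (K i) \<and> Y i \<subseteq> K i \<and> (Y i = {} \<longrightarrow> K i = {}) \<and>
            (\<forall>j\<in>I. j \<noteq> i \<longrightarrow> K i \<inter> K j = {})"
  proof (intro ballI conjI impI)
    fix i assume i: "i \<in> I"
    have finj: "finite {j \<in> I. j < i}" using fin by simp
    have "closedin X (\<Union>(C ` {j \<in> I. j < i}))" using finj C by (intro closedin_Union) auto
    then show "openin X (K i)" unfolding K_def using C[OF i] by (intro openin_diff) auto
    have "openin X (\<Union>(C ` {j \<in> I. j < i}))" using C by (intro openin_Union) auto
    then show "closedin X (K i)" unfolding K_def using C[OF i] by (intro closedin_diff) auto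
    show "Y i \<subseteq> K i"
    proof
      fix y assume y: "y \<in> Y i"
      have "y \<notin> C j" if "j \<in> I" "j < i" for j
      proof -
        have "i \<in> I - {j}" using i that(2) by simp
        then have "y \<in> \<Union>(Y ` (I - {j}))" using y by blast
        then show ?thesis using C[OF that(1)] by blast
      qed
      then show "y \<in> K i" unfolding K_def using C[OF i] y by blast
    qed
    show "K i = {}" if "Y i = {}" using C[OF i] that unfolding K_def by blast
    fix j assume j: "j \<in> I" "j \<noteq> i"
    show "K i \<inter> K j = {}"
    proof (cases "i < j")
      case True then show ?thesis unfolding K_def using i by blast
    next
      case False then have "j < i" using j(2) by simp
      then show ?thesis unfolding K_def using j(1) by blast
    qed
  qed
  then show ?thesis by blast
qed


lemma quotient_class:
  assumes F: "fraisse_limit_G V E" and c: "c \<in> V // E"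
  obtains x where "x \<in> V" "c = E `` {x}" "x \<in> c"
proof -
  obtain x where "c = E `` {x}" "x \<in> V" using c by (rule quotientE)
  moreover have "x \<in> c" using fr_basic(3)[OF F \<open>x \<in> V\<close>] \<open>c = E `` {x}\<close> by simp
  ultimately show ?thesis using that by blast
qed

lemma dim_le1:
  assumes F: "fraisse_limit_G V E"
  shows "covering_dim_le (realization (top_of_set V) E) 1"
  unfolding covering_dim_le_def
proof (intro allI impI)
  note B = fr_basic[OF F]
  let ?X = "top_of_set V"
  let ?R = "realization (top_of_set V) E"
  have tsR: "topspace ?R = V // E" by (simp add: topspace_realization)
  fix \<U> assume asm: "finite \<U> \<and> (\<forall>U\<in>\<U>. openin ?R U) \<and> \<Union>\<U> = topspace ?R"
  then have Ufin: "finite \<U>" and Uop: "\<And>U. U \<in> \<U> \<Longrightarrow> openin ?R U" and Ucov: "\<Union>\<U> = V // E"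
    using tsR by auto
  define pre where "pre U = {x \<in> V. E `` {x} \<in> U}" for U
  have preop: "openin ?X (pre U)" if "U \<in> \<U>" for U
    using Uop[OF that] unfolding openin_realization pre_def by simp
  have "\<forall>U\<in>\<U>. \<exists>T. open T \<and> pre U = V \<inter> T" using preop by (simp add: openin_open)
  from bchoice[OF this] obtain Ob where O0: "\<forall>U\<in>\<U>. open (Ob U) \<and> pre U = V \<inter> Ob U" ..
  note Ob = O0[rule_format]
  have Ecov: "E \<subseteq> \<Union>((\<lambda>U. Ob U \<times> Ob U) ` \<U>)"
  proof
    fix p assume "p \<in> E"
    then obtain x y where p: "p = (x,y)" "(x,y) \<in> E" by (cases p) auto
    have xV: "x \<in> V" "y \<in> V" using p(2) B(2) by auto
    have "E``{x} \<in> V // E" using xV(1) by (rule quotientI)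
    then obtain U where U: "U \<in> \<U>" "E``{x} \<in> U" using Ucov by blast
    have "E``{y} = E``{x}" using class_eq[OF F p(2)] by simp
    then have "x \<in> pre U" "y \<in> pre U" using U xV by (auto simp: pre_def)
    then have "x \<in> Ob U" "y \<in> Ob U" using Ob[OF U(1)] by auto
    then show "p \<in> \<Union>((\<lambda>U. Ob U \<times> Ob U) ` \<U>)" using U p by blast
  qed
  have Gop: "\<And>G. G \<in> (\<lambda>U. Ob U \<times> Ob U) ` \<U> \<Longrightarrow> open G" using Ob by (auto intro: open_Times)
  obtain e where e0: "e > 0" and e: "\<And>p. p \<in> E \<Longrightarrow> \<exists>G \<in> (\<lambda>U. Ob U \<times> Ob U) ` \<U>. ball p e \<subseteq> G"
    using Heine_Borel_lemma[OF B(5) Ecov Gop] by blast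
  have c3: "\<forall>\<epsilon>>0. \<exists>VA EA f. fin_conn_graph VA EA \<and> confluent_epi (top_of_set V) E (discrete_topology VA) EA f \<and>
        (\<forall>a\<in>VA. diameter {x \<in> V. f x = a} < \<epsilon>)"
    using F unfolding fraisse_limit_G_def by blast
  obtain VA EA f where A: "fin_conn_graph VA EA" and cf: "confluent_epi (top_of_set V) E (discrete_topology VA) EA f"
      and dm: "\<forall>a\<in>VA. diameter {x \<in> V. f x = a} < e"
    using c3 e0 by blast
  have VAfin: "finite VA" using A unfolding fin_conn_graph_def by blast
  have epi: "epimorphism (top_of_set V) E (discrete_topology VA) EA f" using cf unfolding confluent_epi_def by blast
  have fim: "f ` V = VA" using epi unfolding epimorphism_def by simp
  have fcont: "continuous_map ?X (discrete_topology VA) f" using epi unfolding epimorphism_def by blast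
  define Fb where "Fb a = {x \<in> V. f x = a}" for a
  have Fop: "openin ?X (Fb a)" if "a \<in> VA" for a
    using openin_continuous_map_preimage[OF fcont, of "{a}"] that by (simp add: Fb_def)
  have Fcl: "closedin ?X (Fb a)" if "a \<in> VA" for a
    using closedin_continuous_map_preimage[OF fcont, of "{a}"] that by (simp add: Fb_def)
  have Fcpt: "compact (Fb a)" if "a \<in> VA" for a using Fcl[OF that] closedin_compact[OF B(1)] by blast
  have Fne: "Fb a \<noteq> {}" if "a \<in> VA" for a using that fim by (auto simp: Fb_def)
  have Fin: "x \<in> Fb (f x)" if "x \<in> V" for x using that by (simp add: Fb_def)
  have close: "dist u w < e" if "u \<in> Fb a" "w \<in> Fb a" for u w a
  proof -
    have uV: "u \<in> V" and fu: "f u = a" using that by (auto simp: Fb_def)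
    have "bounded (Fb a)" using compact_imp_bounded[OF B(1)] by (rule bounded_subset) (auto simp: Fb_def)
    then have "dist u w \<le> diameter (Fb a)" using that by (intro diameter_bounded_bound) auto
    also have "\<dots> < e" using dm fim uV fu by (auto simp: Fb_def)
    finally show ?thesis .
  qed
  have pairsmall: "\<exists>U\<in>\<U>. Fb (f x) \<union> Fb (f x') \<subseteq> pre U" if xx: "(x,x') \<in> E" for x x'
  proof -
    obtain U where U: "U \<in> \<U>" "ball (x,x') e \<subseteq> Ob U \<times> Ob U" using e[OF xx] by blast
    have xV: "x \<in> V" "x' \<in> V" using xx B(2) by auto
    have "Fb (f x) \<subseteq> pre U"
    proof
      fix z assume z: "z \<in> Fb (f x)"
      have "dist z x < e" using close[OF z Fin[OF xV(1)]] .
      then have "(z,x') \<in> ball (x,x') e" by (simp add: dist_Pair_Pair dist_commute)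
      then have "z \<in> Ob U" using U(2) by blast
      then show "z \<in> pre U" using Ob[OF U(1)] z by (auto simp: Fb_def)
    qed
    moreover have "Fb (f x') \<subseteq> pre U"
    proof
      fix z assume z: "z \<in> Fb (f x')"
      have "dist z x' < e" using close[OF z Fin[OF xV(2)]] .
      then have "(x,z) \<in> ball (x,x') e" by (simp add: dist_Pair_Pair dist_commute)
      then have "z \<in> Ob U" using U(2) by blast
      then show "z \<in> pre U" using Ob[OF U(1)] z by (auto simp: Fb_def)
    qed
    ultimately show ?thesis using U(1) by blast
  qed
  define Y where "Y a a' = {x \<in> Fb a. \<exists>y\<in>Fb a'. (x,y) \<in> E}" for a a'
  have Ycl: "closedin ?X (Y a a')" if "a \<in> VA" "a' \<in> VA" for a a'
  proof -
    have eq: "Y a a' = Fb a \<inter> fst ` (E \<inter> (UNIV \<times> Fb a'))" unfolding Y_def by force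
    have "compact (E \<inter> (UNIV \<times> Fb a'))"
      using B(5) closed_Times[OF closed_UNIV compact_imp_closed[OF Fcpt[OF that(2)]]] by (rule compact_Int_closed)
    moreover have "continuous_on (E \<inter> (UNIV \<times> Fb a')) fst" by (intro continuous_intros)
    ultimately have "compact (fst ` (E \<inter> (UNIV \<times> Fb a')))" by (rule compact_continuous_image[rotated])
    then have "compact (Y a a')" unfolding eq using Fcpt[OF that(1)]
      by (simp add: compact_Int_closed compact_imp_closed Int_commute)
    moreover have "Y a a' \<subseteq> V" by (auto simp: Y_def Fb_def)
    ultimately show ?thesis by (intro closed_subset) (auto intro: compact_imp_closed)
  qed
  have Ydj: "Y a i \<inter> Y a j = {}" if "i \<noteq> a" "j \<noteq> a" "i \<noteq> j" for a i j
  proof (rule ccontr)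
    assume "Y a i \<inter> Y a j \<noteq> {}"
    then obtain x y z where x: "x \<in> Fb a" "y \<in> Fb i" "z \<in> Fb j" "(x,y) \<in> E" "(x,z) \<in> E"
      unfolding Y_def by blast
    have "y \<noteq> x" "z \<noteq> x" "y \<noteq> z" using x that by (auto simp: Fb_def)
    then show False using class_two[OF F x(4) x(5)] by blast
  qed
  have cs: "compact_space ?X" using B(1) by (simp add: compact_space_def compactin_subtopology)
  have "\<forall>a\<in>VA. \<exists>Ka. \<forall>i\<in>VA - {a}. openin ?X (Ka i) \<and> closedin ?X (Ka i) \<and> Y a i \<subseteq> Ka i \<and>
          (Y a i = {} \<longrightarrow> Ka i = {}) \<and> (\<forall>j\<in>VA - {a}. j \<noteq> i \<longrightarrow> Ka i \<inter> Ka j = {})"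
  proof
    fix a assume a: "a \<in> VA"
    show "\<exists>Ka. \<forall>i\<in>VA - {a}. openin ?X (Ka i) \<and> closedin ?X (Ka i) \<and> Y a i \<subseteq> Ka i \<and>
          (Y a i = {} \<longrightarrow> Ka i = {}) \<and> (\<forall>j\<in>VA - {a}. j \<noteq> i \<longrightarrow> Ka i \<inter> Ka j = {})"
    proof (rule disjoint_clopens[OF cs B(6)])
      show "finite (VA - {a})" using VAfin by simp
      show "closedin ?X (Y a i)" if "i \<in> VA - {a}" for i using Ycl a that by simp
      show "Y a i \<inter> Y a j = {}" if "i \<in> VA - {a}" "j \<in> VA - {a}" "i \<noteq> j" for i j
        using Ydj that by simp
    qed
  qed
  from bchoice[OF this] obtain K where K0: "\<forall>a\<in>VA. \<forall>i\<in>VA - {a}. openin ?X (K a i) \<and> closedin ?X (K a i) \<and> Y a i \<subseteq> K a i \<and>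
          (Y a i = {} \<longrightarrow> K a i = {}) \<and> (\<forall>j\<in>VA - {a}. j \<noteq> i \<longrightarrow> K a i \<inter> K a j = {})" ..
  define K' where "K' a i = K a i \<inter> Fb a" for a i
  have Kop: "openin ?X (K' a i)" if "a \<in> VA" "i \<in> VA" "i \<noteq> a" for a i
    unfolding K'_def using K0 that Fop[OF that(1)] by (intro openin_Int) auto
  have KY: "Y a i \<subseteq> K' a i" if "a \<in> VA" "i \<in> VA" "i \<noteq> a" for a i
    unfolding K'_def using K0 that by (auto simp: Y_def)
  have Kempty: "K' a i = {}" if "a \<in> VA" "i \<in> VA" "i \<noteq> a" "Y a i = {}" for a i
    unfolding K'_def using K0 that by auto
  have KF: "K' a i \<subseteq> Fb a" for a i unfolding K'_def by blast
  have Kdj: "K' a i \<inter> K' a j = {}" if "a \<in> VA" "i \<in> VA" "i \<noteq> a" "j \<in> VA" "j \<noteq> a" "i \<noteq> j" for a i j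
    unfolding K'_def using K0 that by blast
  define \<Phi> where "\<Phi> S = {c \<in> V // E. c \<subseteq> S}" for S
  have \<Phi>open: "openin ?R (\<Phi> S)" if "openin ?X S" for S
  proof -
    have "{x \<in> V. E `` {x} \<in> \<Phi> S} = {x \<in> V. E `` {x} \<subseteq> S}"
      by (auto simp: \<Phi>_def intro: quotientI)
    then show ?thesis unfolding openin_realization using int_open[OF F that]
      by (simp add: \<Phi>_def)
  qed
  have \<Phi>sub: "\<Phi> S \<subseteq> U" if "S \<subseteq> pre U" for S U
  proof
    fix c assume c: "c \<in> \<Phi> S"
    then have "c \<in> V // E" by (simp add: \<Phi>_def)
    then obtain x where x: "x \<in> V" "c = E `` {x}" "x \<in> c" by (rule quotient_class[OF F])
    then have "x \<in> pre U" using c that by (auto simp: \<Phi>_def)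
    then show "c \<in> U" using x by (simp add: pre_def)
  qed
  define P where "P = {p \<in> VA \<times> VA. fst p \<noteq> snd p}"
  define \<X> where "\<X> = (\<lambda>a. \<Phi> (Fb a)) ` VA"
  define \<N> where "\<N> = (\<lambda>p. \<Phi> (K' (fst p) (snd p) \<union> K' (snd p) (fst p))) ` P"
  define \<V> where "\<V> = \<X> \<union> \<N>"
  have Vfin: "finite \<V>" unfolding \<V>_def \<X>_def \<N>_def P_def using VAfin by simp
  have Vop: "\<forall>W\<in>\<V>. openin ?R W"
  proof
    fix W assume "W \<in> \<V>"
    then consider (x) a where "a \<in> VA" "W = \<Phi> (Fb a)" | (n) p where "p \<in> P" "W = \<Phi> (K' (fst p) (snd p) \<union> K' (snd p) (fst p))"
      unfolding \<V>_def \<X>_def \<N>_def by blast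
    then show "openin ?R W"
    proof cases
      case x then show ?thesis using Fop \<Phi>open by simp
    next
      case n
      then have "fst p \<in> VA" "snd p \<in> VA" "fst p \<noteq> snd p" by (auto simp: P_def)
      then have "openin ?X (K' (fst p) (snd p) \<union> K' (snd p) (fst p))"
        using Kop by (intro openin_Un) auto
      then show ?thesis using n \<Phi>open by simp
    qed
  qed
  have Vcov: "\<Union>\<V> = topspace ?R"
  proof
    show "\<Union>\<V> \<subseteq> topspace ?R"
    proof (rule Union_least)
      fix W assume "W \<in> \<V>" then have "openin ?R W" using Vop by (rule bspec[rotated])
      then show "W \<subseteq> topspace ?R" by (rule openin_subset)
    qed
    show "topspace ?R \<subseteq> \<Union>\<V>"
    proof
      fix c assume "c \<in> topspace ?R"
      then have cq: "c \<in> V // E" using tsR by simp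
      then obtain x where x: "x \<in> V" "c = E `` {x}" "x \<in> c" by (rule quotient_class[OF F])
      show "c \<in> \<Union>\<V>"
      proof (cases "c \<subseteq> Fb (f x)")
        case True
        then have "c \<in> \<Phi> (Fb (f x))" using cq by (simp add: \<Phi>_def)
        moreover have "\<Phi> (Fb (f x)) \<in> \<X>" unfolding \<X>_def using fim x(1) by (intro imageI) blast
        then have "\<Phi> (Fb (f x)) \<in> \<V>" unfolding \<V>_def by (rule UnI1)
        ultimately show ?thesis by blast
      next
        case False
        then obtain x' where x': "x' \<in> c" "x' \<notin> Fb (f x)" by blast
        have xx': "(x,x') \<in> E" using x' x by simp
        have x'V: "x' \<in> V" using xx' B(2) by auto
        have ne: "f x' \<noteq> f x" using x' x'V by (simp add: Fb_def)
        have fxA: "f x \<in> VA" "f x' \<in> VA" using fim x(1) x'V by auto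
        have "x \<in> Y (f x) (f x')" unfolding Y_def using x(1) x'V xx' by (auto simp: Fb_def)
        then have xK: "x \<in> K' (f x) (f x')" using KY[OF fxA(1) fxA(2) ne] by (rule subsetD[rotated])
        have "x' \<in> Y (f x') (f x)" unfolding Y_def using x(1) x'V B(4)[OF xx'] by (auto simp: Fb_def)
        have ne': "f x \<noteq> f x'" using ne by simp
        from \<open>x' \<in> Y (f x') (f x)\<close> have x'K: "x' \<in> K' (f x') (f x)" using KY[OF fxA(2) fxA(1) ne'] by (rule subsetD[rotated])
        have csub: "c \<subseteq> {x, x'}"
        proof
          fix y assume "y \<in> c"
          then have xy: "(x,y) \<in> E" using x by simp
          show "y \<in> {x, x'}"
          proof (cases "y = x")
            case False
            have "x' \<noteq> x" using ne by auto
            then have "y = x'" using class_two[OF F xy xx' False] by simp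
            then show ?thesis by simp
          qed simp
        qed
        have "c \<in> \<Phi> (K' (f x) (f x') \<union> K' (f x') (f x))" using cq csub xK x'K by (auto simp: \<Phi>_def)
        moreover have "(f x, f x') \<in> P" using fxA ne by (auto simp: P_def)
        then have "\<Phi> (K' (f x) (f x') \<union> K' (f x') (f x)) \<in> \<V>" unfolding \<V>_def \<N>_def
          by (metis (no_types, lifting) UnI2 fst_conv snd_conv imageI)
        ultimately show ?thesis by blast
      qed
    qed
  qed
  have Vne: "V \<noteq> {}" using Fne A unfolding fin_conn_graph_def Fb_def by blast
  then have "V // E \<noteq> {}" by (simp add: quotient_def)
  then have Une: "\<U> \<noteq> {}" using Ucov by auto
  have empty_case: "\<Phi> {} = {}"
  proof -
    have "c = {}" if "c \<in> V // E" "c \<subseteq> {}" for c using that by simp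
    moreover have "c \<noteq> {}" if "c \<in> V // E" for c
      using quotient_class[OF F that] by blast
    ultimately show ?thesis unfolding \<Phi>_def by blast
  qed
  have Vref: "\<forall>W\<in>\<V>. \<exists>U\<in>\<U>. W \<subseteq> U"
  proof
    fix W assume "W \<in> \<V>"
    then consider (x) a where "a \<in> VA" "W = \<Phi> (Fb a)" | (n) p where "p \<in> P" "W = \<Phi> (K' (fst p) (snd p) \<union> K' (snd p) (fst p))"
      unfolding \<V>_def \<X>_def \<N>_def by blast
    then show "\<exists>U\<in>\<U>. W \<subseteq> U"
    proof cases
      case x
      obtain z where z: "z \<in> Fb a" using Fne[OF x(1)] by blast
      then have zV: "z \<in> V" "f z = a" by (auto simp: Fb_def)
      obtain U where "U \<in> \<U>" "Fb (f z) \<union> Fb (f z) \<subseteq> pre U" using pairsmall[OF B(3)[OF zV(1)]] by blast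
      then show ?thesis using x zV \<Phi>sub by blast
    next
      case n
      define a where "a = fst p"
      define a' where "a' = snd p"
      have aa: "a \<in> VA" "a' \<in> VA" "a \<noteq> a'" using n(1) by (auto simp: P_def a_def a'_def)
      have W: "W = \<Phi> (K' a a' \<union> K' a' a)" using n(2) by (simp add: a_def a'_def)
      show ?thesis
      proof (cases "Y a a' = {} \<and> Y a' a = {}")
        case True
        then have "W = {}" using W Kempty aa empty_case by simp
        then show ?thesis using Une by blast
      next
        case False
        then obtain u v where uv: "(u,v) \<in> E" "(u \<in> Fb a \<and> v \<in> Fb a') \<or> (u \<in> Fb a' \<and> v \<in> Fb a)"
          unfolding Y_def by blast
        then have fuv: "f u \<in> {a,a'}" "f v \<in> {a,a'}" by (auto simp: Fb_def)
        obtain U where U: "U \<in> \<U>" "Fb (f u) \<union> Fb (f v) \<subseteq> pre U" using pairsmall[OF uv(1)] by blast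
        have "Fb a \<union> Fb a' \<subseteq> pre U" using U(2) uv(2) by (auto simp: Fb_def)
        then have "K' a a' \<union> K' a' a \<subseteq> pre U" using KF by blast
        then show ?thesis using U(1) W \<Phi>sub by blast
      qed
    qed
  qed
  have Vord: "\<forall>c\<in>topspace ?R. card {W \<in> \<V>. c \<in> W} \<le> 1 + 1"
  proof
    fix c assume "c \<in> topspace ?R"
    then have cq: "c \<in> V // E" using tsR by simp
    then obtain x where x: "x \<in> V" "c = E `` {x}" "x \<in> c" by (rule quotient_class[OF F])
    have eq: "{W \<in> \<V>. c \<in> W} = {W \<in> \<X>. c \<in> W} \<union> {W \<in> \<N>. c \<in> W}" unfolding \<V>_def by blast
    have fX: "finite {W \<in> \<X>. c \<in> W}" "finite {W \<in> \<N>. c \<in> W}" using Vfin unfolding \<V>_def by auto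
    have c1: "card {W \<in> \<X>. c \<in> W} \<le> 1"
      unfolding One_nat_def card_le_Suc0_iff_eq[OF fX(1)]
    proof (intro ballI)
      fix W1 W2 assume "W1 \<in> {W \<in> \<X>. c \<in> W}" "W2 \<in> {W \<in> \<X>. c \<in> W}"
      then obtain a b where "W1 = \<Phi> (Fb a)" "W2 = \<Phi> (Fb b)" "c \<in> \<Phi> (Fb a)" "c \<in> \<Phi> (Fb b)"
        unfolding \<X>_def by blast
      moreover then have "x \<in> Fb a" "x \<in> Fb b" using x(3) by (auto simp: \<Phi>_def)
      then have "a = b" by (simp add: Fb_def)
      ultimately show "W1 = W2" by simp
    qed
    have Kuniq: "a = b \<and> a' = b'" if "(a,a') \<in> P" "(b,b') \<in> P" "x \<in> K' a a'" "x \<in> K' b b'" for a a' b b'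
    proof -
      have "a = b" using that(3,4) KF[of a a'] KF[of b b'] by (auto simp: Fb_def)
      moreover have "a' = b'"
      proof (rule ccontr)
        assume "a' \<noteq> b'"
        then have "K' a a' \<inter> K' a b' = {}" using Kdj that(1,2) \<open>a = b\<close> by (auto simp: P_def)
        then show False using that(3,4) \<open>a = b\<close> by blast
      qed
      ultimately show ?thesis by blast
    qed
    have c2: "card {W \<in> \<N>. c \<in> W} \<le> 1"
      unfolding One_nat_def card_le_Suc0_iff_eq[OF fX(2)]
    proof (intro ballI)
      fix W1 W2 assume "W1 \<in> {W \<in> \<N>. c \<in> W}" "W2 \<in> {W \<in> \<N>. c \<in> W}"
      then obtain p q where pq: "p \<in> P" "q \<in> P" "W1 = \<Phi> (K' (fst p) (snd p) \<union> K' (snd p) (fst p))"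
        "W2 = \<Phi> (K' (fst q) (snd q) \<union> K' (snd q) (fst q))" "c \<in> W1" "c \<in> W2"
        unfolding \<N>_def by blast
      obtain a a' b b' where ab: "p = (a,a')" "q = (b,b')" by (cases p, cases q) auto
      have P': "(a',a) \<in> P" "(b',b) \<in> P" using pq(1,2) ab by (auto simp: P_def)
      have xa: "x \<in> K' a a' \<or> x \<in> K' a' a" using pq(3,5) x(3) ab by (auto simp: \<Phi>_def)
      have xb: "x \<in> K' b b' \<or> x \<in> K' b' b" using pq(4,6) x(3) ab by (auto simp: \<Phi>_def)
      have "(a = b \<and> a' = b') \<or> (a = b' \<and> a' = b)"
        using xa xb Kuniq[of a a' b b'] Kuniq[of a a' b' b] Kuniq[of a' a b b'] Kuniq[of a' a b' b]
          pq(1,2) P' ab by blast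
      then show "W1 = W2" using pq(3,4) ab by (auto simp: Un_commute)
    qed
    have "card {W \<in> \<V>. c \<in> W} \<le> card {W \<in> \<X>. c \<in> W} + card {W \<in> \<N>. c \<in> W}"
      unfolding eq by (rule card_Un_le)
    then show "card {W \<in> \<V>. c \<in> W} \<le> 1 + 1" using c1 c2 by simp
  qed
  show "\<exists>\<V>. finite \<V> \<and> (\<forall>W\<in>\<V>. openin ?R W) \<and> \<Union>\<V> = topspace ?R \<and>
             (\<forall>W\<in>\<V>. \<exists>U\<in>\<U>. W \<subseteq> U) \<and>
             (\<forall>x\<in>topspace ?R. card {W\<in>\<V>. x \<in> W} \<le> 1 + 1)"
    using Vfin Vop Vcov Vref Vord by blast
qed


lemma P3_graph: "fin_conn_graph {0,1,2::nat} {(0,0),(1,1),(2,2),(0,1),(1,0),(1,2),(2,1)}"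
proof -
  let ?VA = "{0,1,2::nat}"
  let ?EA = "{(0,0),(1,1),(2,2),(0,1),(1,0),(1,2),(2,1)} :: (nat \<times> nat) set"
  have g: "is_graph (discrete_topology ?VA) ?EA" unfolding is_graph_def by auto
  have c: "\<not> (\<exists>P Q. P \<noteq> {} \<and> Q \<noteq> {} \<and> P \<union> Q = ?VA \<and> P \<inter> Q = {} \<and> (\<forall>p\<in>P. \<forall>q\<in>Q. (p, q) \<notin> ?EA))"
  proof
    assume "\<exists>P Q. P \<noteq> {} \<and> Q \<noteq> {} \<and> P \<union> Q = ?VA \<and> P \<inter> Q = {} \<and> (\<forall>p\<in>P. \<forall>q\<in>Q. (p, q) \<notin> ?EA)"
    then obtain P Q where PQ: "P \<noteq> {}" "Q \<noteq> {}" "P \<union> Q = ?VA" "P \<inter> Q = {}" "\<forall>p\<in>P. \<forall>q\<in>Q. (p, q) \<notin> ?EA"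
      by metis
    have "(1::nat) \<in> P \<union> Q" using PQ(3) by simp
    then consider "(1::nat) \<in> P" | "(1::nat) \<in> Q" by blast
    then show False
    proof cases
      case 1
      have "0 \<notin> Q" "1 \<notin> Q" "2 \<notin> Q" using PQ(4,5) 1 by auto
      moreover have "Q \<subseteq> ?VA" using PQ(3) by blast
      ultimately have "Q = {}" by blast
      then show False using PQ(2) by simp
    next
      case 2
      have "0 \<notin> P" "1 \<notin> P" "2 \<notin> P" using PQ(4,5) 2 by auto
      moreover have "P \<subseteq> ?VA" using PQ(3) by blast
      ultimately have "P = {}" by blast
      then show False using PQ(1) by simp
    qed
  qed
  show ?thesis unfolding fin_conn_graph_def gr_connected_discrete using g c by simp
qed

lemma class_closed:
  assumes F: "fraisse_limit_G V E" and x: "x \<in> V"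
  shows "closed (E `` {x})" "E `` {x} \<subseteq> V"
proof -
  note B = fr_basic[OF F]
  have "compact (E \<inter> ({x} \<times> UNIV))" using B(5) closed_Times[OF closed_singleton closed_UNIV]
    by (rule compact_Int_closed)
  moreover have "continuous_on (E \<inter> ({x} \<times> UNIV)) snd" by (intro continuous_intros)
  ultimately have "compact (snd ` (E \<inter> ({x} \<times> UNIV)))" by (rule compact_continuous_image[rotated])
  moreover have "snd ` (E \<inter> ({x} \<times> UNIV)) = E `` {x}" by force
  ultimately show "closed (E `` {x})" by (simp add: compact_imp_closed)
  show "E `` {x} \<subseteq> V" using B(2) by auto
qed

lemma not_dim0:
  assumes F: "fraisse_limit_G V E"
  shows "\<not> covering_dim_le (realization (top_of_set V) E) 0"
proof
  note B = fr_basic[OF F]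
  let ?X = "top_of_set V"
  let ?R = "realization (top_of_set V) E"
  have tsR: "topspace ?R = V // E" by (simp add: topspace_realization)
  assume D: "covering_dim_le ?R 0"
  let ?VA = "{0,1,2::nat}"
  let ?EA = "{(0,0),(1,1),(2,2),(0,1),(1,0),(1,2),(2,1)} :: (nat \<times> nat) set"
  have c1f: "\<forall>VA EA. fin_conn_graph VA EA \<longrightarrow> (\<exists>f. confluent_epi (top_of_set V) E (discrete_topology VA) EA f)"
    using F unfolding fraisse_limit_G_def by blast
  obtain f where cf: "confluent_epi ?X E (discrete_topology ?VA) ?EA f"
    using c1f P3_graph by blast
  have fim: "f ` V = ?VA" and fpres: "\<And>u v. (u,v) \<in> E \<Longrightarrow> (f u, f v) \<in> ?EA"
    using cf unfolding confluent_epi_def epimorphism_def by auto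
  obtain x1 where x1: "x1 \<in> V" "f x1 = 0" using fim by (metis imageE insertI1)
  obtain x2 where x2: "x2 \<in> V" "f x2 = 2" using fim by (metis imageE insertI1 insertI2)
  have nx: "(x1,x2) \<notin> E"
  proof
    assume "(x1,x2) \<in> E" then have "(f x1, f x2) \<in> ?EA" by (rule fpres)
    then show False using x1 x2 by simp
  qed
  define c1 where "c1 = E `` {x1}"
  define c2 where "c2 = E `` {x2}"
  have c12: "c1 \<noteq> c2"
  proof
    assume "c1 = c2"
    moreover have "x2 \<in> c2" unfolding c2_def using B(3)[OF x2(1)] by simp
    ultimately show False using nx unfolding c1_def by (metis Image_singleton_iff)
  qed
  have c1q: "c1 \<in> V // E" "c2 \<in> V // E" unfolding c1_def c2_def using x1 x2 by (auto intro: quotientI)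
  have preq: "{y \<in> V. E `` {y} \<in> V // E - {E `` {x}}} = V \<inter> - (E `` {x})" if x: "x \<in> V" for x
  proof -
    have "E `` {y} = E `` {x} \<longleftrightarrow> y \<in> E `` {x}" if y: "y \<in> V" for y
    proof
      assume "E `` {y} = E `` {x}"
      then show "y \<in> E `` {x}" using B(3)[OF y] by auto
    next
      assume "y \<in> E `` {x}"
      then show "E `` {y} = E `` {x}" using class_eq[OF F, of x y] by simp
    qed
    then show ?thesis by (auto intro: quotientI)
  qed
  have Uop: "openin ?R (V // E - {E `` {x}})" if x: "x \<in> V" for x
  proof -
    have "openin ?X (V \<inter> - (E `` {x}))" using class_closed(1)[OF F x]
      by (intro openin_open_Int) (simp add: open_Compl)
    then show ?thesis unfolding openin_realization using preq[OF x] by simp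
  qed
  define \<U> where "\<U> = {V // E - {c1}, V // E - {c2}}"
  have U1: "finite \<U>" unfolding \<U>_def by simp
  have U2: "\<forall>U\<in>\<U>. openin ?R U" unfolding \<U>_def c1_def c2_def using Uop[OF x1(1)] Uop[OF x2(1)] by simp
  have U3: "\<Union>\<U> = topspace ?R" unfolding \<U>_def tsR using c12 by blast
  have ex: "\<exists>\<V>. finite \<V> \<and> (\<forall>W\<in>\<V>. openin ?R W) \<and> \<Union>\<V> = topspace ?R \<and>
             (\<forall>W\<in>\<V>. \<exists>U\<in>\<U>. W \<subseteq> U) \<and>
             (\<forall>x\<in>topspace ?R. card {W\<in>\<V>. x \<in> W} \<le> 0 + 1)"
    using D[unfolded covering_dim_le_def, rule_format, OF conjI[OF U1 conjI[OF U2 U3]]] .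
  then obtain \<V> where Vfin: "finite \<V>" and Vop: "\<forall>W\<in>\<V>. openin ?R W" and Vcov0: "\<Union>\<V> = topspace ?R"
    and Vref: "\<forall>W\<in>\<V>. \<exists>U\<in>\<U>. W \<subseteq> U" and Vord0: "\<forall>x\<in>topspace ?R. card {W\<in>\<V>. x \<in> W} \<le> 0 + 1"
    by (elim exE conjE)
  have Vcov: "\<Union>\<V> = V // E" using Vcov0 tsR by simp
  have Vord: "\<forall>x\<in>V // E. card {W\<in>\<V>. x \<in> W} \<le> 0 + 1" using Vord0 tsR by simp
  obtain W0 where W0: "W0 \<in> \<V>" "c1 \<in> W0" using Vcov c1q by blast
  have c2W0: "c2 \<notin> W0"
  proof -
    obtain U where "U \<in> \<U>" "W0 \<subseteq> U" using Vref W0(1) by blast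
    then have "W0 \<subseteq> V // E - {c2}" using W0(2) unfolding \<U>_def by auto
    then show ?thesis by blast
  qed
  obtain W1 where W1: "W1 \<in> \<V>" "c2 \<in> W1" using Vcov c1q by blast
  have W01: "W1 \<noteq> W0" using W1 c2W0 by blast
  define Ps where "Ps = {y \<in> V. E `` {y} \<in> W0}"
  define Qs where "Qs = {y \<in> V. E `` {y} \<in> \<Union>(\<V> - {W0})}"
  have Psop: "openin ?X Ps" using Vop W0(1) unfolding Ps_def openin_realization by simp
  have "openin ?R (\<Union>(\<V> - {W0}))" using Vop by (intro openin_Union) blast
  then have Qsop: "openin ?X Qs" unfolding Qs_def openin_realization by simp
  have PQcov: "V \<subseteq> Ps \<union> Qs"
  proof
    fix y assume y: "y \<in> V"
    then have "E `` {y} \<in> \<Union>\<V>" using Vcov by (auto intro: quotientI)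
    then show "y \<in> Ps \<union> Qs" using y unfolding Ps_def Qs_def by blast
  qed
  have PQdj: "Ps \<inter> Qs = {}"
  proof (rule ccontr)
    assume "Ps \<inter> Qs \<noteq> {}"
    then obtain y W' where y: "y \<in> V" "E `` {y} \<in> W0" "W' \<in> \<V>" "W' \<noteq> W0" "E `` {y} \<in> W'"
      unfolding Ps_def Qs_def by blast
    have yq: "E `` {y} \<in> V // E" using y(1) by (rule quotientI)
    have fin: "finite {W\<in>\<V>. E `` {y} \<in> W}" using Vfin by simp
    have "card {W\<in>\<V>. E `` {y} \<in> W} \<le> Suc 0" using Vord yq by simp
    then have "\<forall>a\<in>{W\<in>\<V>. E `` {y} \<in> W}. \<forall>b\<in>{W\<in>\<V>. E `` {y} \<in> W}. a = b"
      using card_le_Suc0_iff_eq[OF fin] by blast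
    then show False using y W0(1) by blast
  qed
  have x1P: "x1 \<in> Ps" using x1(1) W0(2) unfolding Ps_def c1_def by simp
  have x2Q: "x2 \<in> Qs" using x2(1) W1 W01 unfolding Qs_def c2_def by blast
  have noedge: "(p,q) \<notin> E" if "p \<in> Ps" "q \<in> Qs" for p q
  proof
    assume pq: "(p,q) \<in> E"
    have "E `` {q} = E `` {p}" using class_eq[OF F pq] by simp
    then have "q \<in> Ps" using that B(2) pq unfolding Ps_def by auto
    then show False using that(2) PQdj by blast
  qed
  obtain OP where OP: "open OP" "Ps = V \<inter> OP" using Psop by (auto simp: openin_open)
  obtain OQ where OQ: "open OQ" "Qs = V \<inter> OQ" using Qsop by (auto simp: openin_open)
  have Vsub: "V \<subseteq> \<Union>{OP, OQ}" using PQcov OP OQ by blast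
  obtain e where e0: "e > 0" and e: "\<And>x. x \<in> V \<Longrightarrow> \<exists>G \<in> {OP, OQ}. ball x e \<subseteq> G"
    using Heine_Borel_lemma[OF B(1) Vsub] OP OQ by blast
  have c3: "\<forall>\<epsilon>>0. \<exists>VA EA f. fin_conn_graph VA EA \<and> confluent_epi (top_of_set V) E (discrete_topology VA) EA f \<and>
        (\<forall>a\<in>VA. diameter {x \<in> V. f x = a} < \<epsilon>)"
    using F unfolding fraisse_limit_G_def by blast
  obtain VA EA g where A: "fin_conn_graph VA EA" and cg: "confluent_epi (top_of_set V) E (discrete_topology VA) EA g"
      and dm: "\<forall>a\<in>VA. diameter {x \<in> V. g x = a} < e"
    using c3 e0 by blast
  have gim: "g ` V = VA" and gedge: "(\<lambda>(a, b). (g a, g b)) ` E = EA"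
    using cg unfolding confluent_epi_def epimorphism_def by auto
  define Fb where "Fb a = {x \<in> V. g x = a}" for a
  have side: "Fb a \<subseteq> Ps \<or> Fb a \<subseteq> Qs" if a: "a \<in> VA" for a
  proof -
    obtain z where z: "z \<in> V" "g z = a" using a gim by blast
    have bnd: "bounded (Fb a)" using compact_imp_bounded[OF B(1)] by (rule bounded_subset) (auto simp: Fb_def)
    have dd: "dist z w < e" if "w \<in> Fb a" for w
    proof -
      have "dist z w \<le> diameter (Fb a)" using bnd z that by (intro diameter_bounded_bound) (auto simp: Fb_def)
      also have "\<dots> < e" using dm a by (simp add: Fb_def)
      finally show ?thesis .
    qed
    obtain G where G: "G \<in> {OP, OQ}" "ball z e \<subseteq> G" using e[OF z(1)] by blast
    have "Fb a \<subseteq> V \<inter> G"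
    proof
      fix w assume w: "w \<in> Fb a"
      then have "w \<in> ball z e" using dd by simp
      then show "w \<in> V \<inter> G" using G(2) w by (auto simp: Fb_def)
    qed
    then show ?thesis using G(1) OP(2) OQ(2) by blast
  qed
  define PA where "PA = {a \<in> VA. Fb a \<subseteq> Ps}"
  define QA where "QA = VA - PA"
  have QAQ: "Fb a \<subseteq> Qs" if "a \<in> QA" for a using side that unfolding QA_def PA_def by blast
  have inF: "x \<in> Fb (g x)" if "x \<in> V" for x using that by (simp add: Fb_def)
  have gx1: "g x1 \<in> PA"
  proof -
    have "g x1 \<in> VA" using gim x1(1) by blast
    moreover have "\<not> Fb (g x1) \<subseteq> Qs" using inF[OF x1(1)] x1P PQdj by blast
    ultimately show ?thesis using side unfolding PA_def by blast
  qed
  have gx2: "g x2 \<in> QA"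
  proof -
    have "g x2 \<in> VA" using gim x2(1) by blast
    moreover have "\<not> Fb (g x2) \<subseteq> Ps" using inF[OF x2(1)] x2Q PQdj by blast
    ultimately show ?thesis unfolding QA_def PA_def by blast
  qed
  have conn: "\<not> (\<exists>P Q. P \<noteq> {} \<and> Q \<noteq> {} \<and> P \<union> Q = VA \<and> P \<inter> Q = {} \<and> (\<forall>p\<in>P. \<forall>q\<in>Q. (p, q) \<notin> EA))"
    using A unfolding fin_conn_graph_def gr_connected_discrete by blast
  have "PA \<noteq> {}" "QA \<noteq> {}" "PA \<union> QA = VA" "PA \<inter> QA = {}" using gx1 gx2
    unfolding QA_def PA_def by auto
  then obtain p q where pq: "p \<in> PA" "q \<in> QA" "(p,q) \<in> EA" using conn by blast
  obtain u w where uw: "(u,w) \<in> E" "g u = p" "g w = q" using pq(3) gedge by auto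
  have uV: "u \<in> V" "w \<in> V" using uw(1) B(2) by auto
  have "u \<in> Ps" using inF[OF uV(1)] uw(2) pq(1) unfolding PA_def by blast
  moreover have "w \<in> Qs" using inF[OF uV(2)] uw(3) QAQ[OF pq(2)] by blast
  ultimately show False using noedge uw(1) by blast
qed

theorem mainTheorem5:
  fixes V :: "'a::metric_space set" and E :: "('a \<times> 'a) set"
  assumes "fraisse_limit_G V E"
  shows "covering_dim_eq (realization (top_of_set V) E) 1"
  unfolding covering_dim_eq_def
proof (intro conjI allI impI)
  show "covering_dim_le (realization (top_of_set V) E) 1" by (rule dim_le1[OF assms])
  fix m :: nat assume "m < 1"
  then have "m = 0" by simp
  then show "\<not> covering_dim_le (realization (top_of_set V) E) m" using not_dim0[OF assms] by simp
qed

end
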